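(* Let $w$ be the one-sided fixed point starting with $a$ of the Fibonacci substitution, and let $n\ge1$. There exist strictly increasing sequences $(j_k)_{k\ge0}$, $(l_k)_{k\ge0}$, $(m_k)_{k\ge0}$ of even nonnegative integers such that \[C_a(X)=C_{a,R_n}(X)\sum_{k=0}^\infty X^{j_k}+C_{a,S_n}(X)\sum_{k=0}^\infty X^{l_k}+C_{a,T_n}(X)\sum_{k=0}^\infty X^{m_k}\] as formal power series (hence also for all real $X\in(-1,1)$).
   Context: The Fibonacci substitution is $\sigma(a)=ab$, $\sigma(b)=a$, extended to words by concatenation; $w=w_0w_1\ldots=\lim_{m\to\infty}\sigma^m(a)$ is its fixed point starting with $a$, and $C_a(X)=\sum_{n\ge0}1_a(w_n)X^n$. Let $A_n=\sigma^n(a)$, $B_n=\sigma^n(b)$, and $R_n=A_{3n}B_{3n}$, $S_n=A_{3n}A_{3n}$, $T_n=B_{3n}A_{3n}$ (concatenations). With Fibonacci numbers $f_1=f_2=1$, $f_{i+2}=f_{i+1}+f_i$, one has $|A_n|=f_{n+2}$, $|R_n|=|T_n|=f_{3n+3}$, $|S_n|=2f_{3n+2}$, all even. For a finite word $u=u_0\cdots u_L$, $C_{a,u}(X)=\sum_{i=0}^{L}1_a(u_i)X^i$. *)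

theory Defs
  imports "HOL-Computational_Algebra.Formal_Power_Series"
begin

datatype letter = La | Lb

fun sigma1 :: "letter \<Rightarrow> letter list" where
  "sigma1 La = [La, Lb]"
| "sigma1 Lb = [La]"

definition sigma :: "letter list \<Rightarrow> letter list" where
  "sigma u = concat (map sigma1 u)"

definition Aw :: "nat \<Rightarrow> letter list" where "Aw n = (sigma ^^ n) [La]"
definition Bw :: "nat \<Rightarrow> letter list" where "Bw n = (sigma ^^ n) [Lb]"

definition Rw :: "nat \<Rightarrow> letter list" where "Rw n = Aw (3*n) @ Bw (3*n)"
definition Sw :: "nat \<Rightarrow> letter list" where "Sw n = Aw (3*n) @ Aw (3*n)"
definition Tw :: "nat \<Rightarrow> letter list" where "Tw n = Bw (3*n) @ Aw (3*n)"

text \<open>The fixed point w = lim sigma^m(a): since sigma^m(a) is a prefix of sigma^(m+1)(a)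
  and has length f_(m+2) > m, the n-th letter of w is the n-th letter of sigma^(n+1)(a).\<close>
definition fibw :: "nat \<Rightarrow> letter" where
  "fibw n = Aw (Suc n) ! n"

definition ind_a :: "letter \<Rightarrow> real" where
  "ind_a x = (if x = La then 1 else 0)"

definition Ca :: "real fps" where
  "Ca = Abs_fps (\<lambda>i. ind_a (fibw i))"

definition Cau :: "letter list \<Rightarrow> real fps" where
  "Cau u = Abs_fps (\<lambda>i. if i < length u then ind_a (u ! i) else 0)"

text \<open>For an injective (e.g. strictly increasing) sequence j, the formal power series
  sum_k X^(j k) has coefficient 1 at exponents in the range of j and 0 elsewhere.\<close>
definition seq_series :: "(nat \<Rightarrow> nat) \<Rightarrow> real fps" where
  "seq_series j = Abs_fps (\<lambda>i. if i \<in> range j then 1 else 0)"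

end

theory Submission
  imports Defs "HOL-Library.Infinite_Set"
begin

lemma sigma_append[simp]: "sigma (u @ v) = sigma u @ sigma v"
  by (simp add: sigma_def)

lemma sigma_Nil[simp]: "sigma [] = []"
  by (simp add: sigma_def)

lemma sigmaN_append: "(sigma ^^ N) (u @ v) = (sigma ^^ N) u @ (sigma ^^ N) v"
  by (induction N) auto

lemma sigmaN_Nil: "(sigma ^^ N) [] = []"
  by (induction N) auto

lemma sigmaN_concat: "(sigma ^^ N) u = concat (map (\<lambda>x. (sigma ^^ N) [x]) u)"
proof (induction u)
  case Nil then show ?case by (simp add: sigmaN_Nil)
next
  case (Cons x u)
  have "(sigma ^^ N) (x # u) = (sigma ^^ N) ([x] @ u)" by simp
  also have "\<dots> = (sigma ^^ N) [x] @ (sigma ^^ N) u" by (rule sigmaN_append)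
  finally show ?case using Cons by simp
qed

lemma Aw_0[simp]: "Aw 0 = [La]" by (simp add: Aw_def)
lemma Bw_0[simp]: "Bw 0 = [Lb]" by (simp add: Bw_def)

lemma Aw_Suc: "Aw (Suc m) = Aw m @ Bw m"
proof -
  have "Aw (Suc m) = (sigma ^^ m) (sigma [La])" unfolding Aw_def by (simp add: funpow_Suc_right del: funpow.simps)
  also have "sigma [La] = [La] @ [Lb]" by (simp add: sigma_def)
  finally show ?thesis by (simp only: sigmaN_append Aw_def Bw_def)
qed

lemma Bw_Suc: "Bw (Suc m) = Aw m"
proof -
  have "Bw (Suc m) = (sigma ^^ m) (sigma [Lb])" unfolding Bw_def by (simp add: funpow_Suc_right del: funpow.simps)
  also have "sigma [Lb] = [La]" by (simp add: sigma_def)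
  finally show ?thesis by (simp add: Aw_def)
qed

lemma Aw_Suc_sigma: "Aw (Suc m) = sigma (Aw m)"
  by (simp add: Aw_def)

lemma len_AwB: "length (Aw m) \<ge> Suc m \<and> length (Bw m) \<ge> 1"
  by (induction m) (auto simp: Aw_Suc Bw_Suc)

lemma len_Aw: "length (Aw m) \<ge> Suc m"
  using len_AwB by blast

lemma Aw_prefix: "m \<le> m' \<Longrightarrow> \<exists>t. Aw m' = Aw m @ t"
proof (induction m' rule: dec_induct)
  case base then show ?case by simp
next
  case (step k) then show ?case by (auto simp: Aw_Suc)
qed

lemma fibw_Aw: "i < length (Aw m) \<Longrightarrow> fibw i = Aw m ! i"
proof (cases "m \<le> Suc i")
  case True
  assume i: "i < length (Aw m)"
  obtain t where "Aw (Suc i) = Aw m @ t" using Aw_prefix[OF True] by blast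
  then show ?thesis using i by (simp add: fibw_def nth_append)
next
  case False
  then obtain t where t: "Aw m = Aw (Suc i) @ t" using Aw_prefix[of "Suc i" m] by auto
  have "i < length (Aw (Suc i))" using len_Aw[of "Suc i"] by simp
  then show ?thesis using t by (simp add: fibw_def nth_append)
qed

lemma parity3: "odd (length (Aw (3*n))) \<and> odd (length (Bw (3*n)))"
proof (induction n)
  case 0 then show ?case by simp
next
  case (Suc n)
  have e: "3 * Suc n = Suc (Suc (Suc (3*n)))" by simp
  show ?case using Suc unfolding e by (simp add: Aw_Suc Bw_Suc)
qed

lemma even_Aw31: "even (length (Aw (Suc (3*q))))"
  using parity3[of q] by (simp add: Aw_Suc)

lemma sigma_b_next: "Suc i < length (sigma u) \<Longrightarrow> sigma u ! i = Lb \<Longrightarrow> sigma u ! Suc i = La"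
proof (induction u arbitrary: i)
  case Nil then show ?case by simp
next
  case (Cons x u)
  have hd: "u \<noteq> [] \<Longrightarrow> sigma u ! 0 = La"
    by (cases u; cases "hd u") (auto simp: sigma_def)
  have s: "sigma (x # u) = sigma1 x @ sigma u" by (simp add: sigma_def)
  show ?case
  proof (cases x)
    case La
    show ?thesis
    proof (cases i)
      case 0 then show ?thesis using Cons.prems La s by simp
    next
      case (Suc i')
      show ?thesis
      proof (cases i')
        case 0 then show ?thesis using Cons.prems La s Suc hd by (cases u) (auto simp: sigma_def)
      next
        case (Suc i'')
        then show ?thesis using Cons.prems Cons.IH[of i''] La s \<open>i = Suc i'\<close> by simp
      qed
    qed
  next
    case Lb
    show ?thesis
    proof (cases i)
      case 0 then show ?thesis using Cons.prems Lb s by simp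
    next
      case (Suc i')
      then show ?thesis using Cons.prems Cons.IH[of i'] Lb s by simp
    qed
  qed
qed

lemma fibw_no_bb: "fibw i = Lb \<Longrightarrow> fibw (Suc i) = La"
proof -
  assume h: "fibw i = Lb"
  let ?M = "Suc (Suc i)"
  have l: "Suc i < length (Aw (Suc ?M))" using len_Aw[of "Suc ?M"] by simp
  have "fibw i = sigma (Aw ?M) ! i" using fibw_Aw[of i "Suc ?M"] l by (simp add: Aw_Suc_sigma)
  moreover have "fibw (Suc i) = sigma (Aw ?M) ! Suc i" using fibw_Aw[of "Suc i" "Suc ?M"] l by (simp add: Aw_Suc_sigma)
  ultimately show ?thesis using h sigma_b_next[of i "Aw ?M"] l by (simp add: Aw_Suc_sigma)
qed

lemma len_concat_take:
  "m \<le> length v \<Longrightarrow> length (concat (map g (take m v))) = (\<Sum>i<m. length (g (v ! i)))"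
proof (induction m)
  case 0 then show ?case by simp
next
  case (Suc m)
  then have "take (Suc m) v = take m v @ [v ! m]" by (simp add: take_Suc_conv_app_nth)
  with Suc show ?case by simp
qed

definition gN :: "nat \<Rightarrow> letter \<Rightarrow> letter list" where
  "gN N x = (sigma ^^ N) [x]"

definition blk :: "nat \<Rightarrow> nat \<Rightarrow> letter list" where
  "blk N k = gN N (fibw (2*k)) @ gN N (fibw (Suc (2*k)))"

definition pos :: "nat \<Rightarrow> nat \<Rightarrow> nat" where
  "pos N k = (\<Sum>i<k. length (blk N i))"

lemma pos_Suc: "pos N (Suc k) = pos N k + length (blk N k)"
  by (simp add: pos_def)

lemma pos2: "pos N k = (\<Sum>i<2*k. length (gN N (fibw i)))"
proof (induction k)
  case 0 then show ?case by (simp add: pos_def)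
next
  case (Suc k)
  have e: "2 * Suc k = Suc (Suc (2*k))" by simp
  show ?case unfolding e pos_Suc Suc by (simp add: blk_def)
qed

lemma block_fibw:
  assumes q: "q < length (blk N k)"
  shows "fibw (pos N k + q) = blk N k ! q"
proof -
  define M where "M = Suc (Suc (2*k))"
  define v where "v = Aw M"
  have lv: "Suc (2*k) < length v" using len_Aw[of M] by (simp add: v_def M_def)
  have vf: "\<And>i. i < length v \<Longrightarrow> v ! i = fibw i" using fibw_Aw by (simp add: v_def)
  have AN: "Aw (N + M) = concat (map (gN N) v)"
  proof -
    have "Aw (N + M) = (sigma ^^ N) (Aw M)" unfolding Aw_def by (simp add: funpow_add)
    also have "\<dots> = concat (map (\<lambda>x. (sigma ^^ N) [x]) (Aw M))" by (rule sigmaN_concat)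
    finally show ?thesis unfolding v_def gN_def by simp
  qed
  have dec: "v = take (2*k) v @ (v ! (2*k) # v ! Suc (2*k) # drop (Suc (Suc (2*k))) v)"
    using lv by (simp add: Cons_nth_drop_Suc)
  define D where "D = concat (map (gN N) (take (2*k) v))"
  define rest where "rest = concat (map (gN N) (drop (Suc (Suc (2*k))) v))"
  have lD: "length D = pos N k"
    unfolding D_def pos2 using lv by (simp add: len_concat_take vf)
  have "Aw (N + M) = D @ (blk N k @ rest)"
    unfolding AN D_def rest_def blk_def
    by (subst dec) (simp add: vf lv Suc_lessD)
  then have "Aw (N + M) ! (pos N k + q) = blk N k ! q" and "pos N k + q < length (Aw (N+M))"
    using q lD by (auto simp: nth_append)
  then show ?thesis using fibw_Aw by simp
qed

lemma gN_La: "gN N La = Aw N" by (simp add: gN_def Aw_def)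
lemma gN_Lb: "gN N Lb = Bw N" by (simp add: gN_def Bw_def)

lemma gN_nonempty: "length (gN N x) \<ge> 1"
  using len_AwB[of N] by (cases x) (auto simp: gN_La gN_Lb)

lemma gN_odd: "odd (length (gN (3*n) x))"
  using parity3[of n] by (cases x) (auto simp: gN_La gN_Lb)

lemma blk_len: "length (blk N k) \<ge> 1"
  using gN_nonempty[of N "fibw (2*k)"] by (simp add: blk_def)

lemma pos_strict: "strict_mono (pos N)"
  unfolding strict_mono_Suc_iff using blk_len[of N] by (simp add: pos_Suc Suc_le_eq)

lemma pos_0[simp]: "pos N 0 = 0" by (simp add: pos_def)

lemma pos_even: "even (pos (3*n) k)"
proof (induction k)
  case 0 then show ?case by simp
next
  case (Suc k)
  have "odd (length (gN (3*n) (fibw (2*k))))" "odd (length (gN (3*n) (fibw (Suc (2*k)))))" by (rule gN_odd)+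
  with Suc show ?case by (simp add: pos_Suc blk_def)
qed

lemma pos_exists: "\<exists>k. pos N k \<le> p \<and> p < pos N (Suc k)"
proof (induction p)
  case 0 then show ?case using blk_len[of N 0] by (auto simp: pos_Suc intro!: exI[of _ 0])
next
  case (Suc p)
  then obtain k where k: "pos N k \<le> p" "p < pos N (Suc k)" by blast
  show ?case
  proof (cases "Suc p < pos N (Suc k)")
    case True then show ?thesis using k by (auto intro!: exI[of _ k])
  next
    case False
    then have "Suc p = pos N (Suc k)" using k by simp
    moreover have "pos N (Suc k) < pos N (Suc (Suc k))" using pos_strict[of N] by (simp add: strict_mono_def)
    ultimately show ?thesis by (auto intro!: exI[of _ "Suc k"])
  qed
qed

lemma pos_unique:
  assumes "pos N k \<le> p" "p < pos N (Suc k)" "pos N k' \<le> p" "p < pos N (Suc k')"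
  shows "k = k'"
proof (rule ccontr)
  assume "k \<noteq> k'"
  then consider "Suc k \<le> k'" | "Suc k' \<le> k" by linarith
  then show False
  proof cases
    case 1 then have "pos N (Suc k) \<le> pos N k'" using pos_strict[of N] by (simp add: strict_mono_less_eq)
    then show False using assms by linarith
  next
    case 2 then have "pos N (Suc k') \<le> pos N k" using pos_strict[of N] by (simp add: strict_mono_less_eq)
    then show False using assms by linarith
  qed
qed

lemma coeff_lemma:
  assumes Ku: "\<And>k. k \<in> K \<Longrightarrow> blk N k = u"
    and rng: "range s = pos N ` K"
    and kp: "pos N k \<le> p" "p < pos N (Suc k)"
  shows "fps_nth (Cau u * seq_series s) p = (if k \<in> K then ind_a (u ! (p - pos N k)) else 0)"
proof -
  define f where "f t = (if t < length u then ind_a (u ! t) else 0) * (if p - t \<in> pos N ` K then (1::real) else 0)" for t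
  have eq: "fps_nth (Cau u * seq_series s) p = (\<Sum>t=0..p. f t)"
    unfolding fps_mult_nth Cau_def seq_series_def rng f_def by simp
  have zero: "f t = 0" if t: "t \<le> p" and ne: "\<not> (k \<in> K \<and> t = p - pos N k)" for t
  proof (rule ccontr)
    assume "f t \<noteq> 0"
    then have tu: "t < length u" and "p - t \<in> pos N ` K" by (auto simp: f_def split: if_splits)
    then obtain k' where k': "k' \<in> K" "p - t = pos N k'" by auto
    have "blk N k' = u" using Ku k' by simp
    then have "pos N k' \<le> p" "p < pos N (Suc k')" using k' t tu by (auto simp: pos_Suc)
    then have "k' = k" using pos_unique kp by blast
    then show False using ne k' t by auto
  qed
  show ?thesis
  proof (cases "k \<in> K")
    case False
    then have "(\<Sum>t=0..p. f t) = 0" using zero by (intro sum.neutral) auto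
    then show ?thesis using eq False by simp
  next
    case True
    define t0 where "t0 = p - pos N k"
    have t0p: "t0 \<in> {0..p}" by (simp add: t0_def)
    have "(\<Sum>t=0..p. f t) = f t0 + (\<Sum>t\<in>{0..p} - {t0}. f t)"
      by (rule sum.remove[OF _ t0p]) simp
    also have "(\<Sum>t\<in>{0..p} - {t0}. f t) = 0" using zero True by (intro sum.neutral) (auto simp: t0_def)
    also have "blk N k = u" using Ku True by simp
    then have "t0 < length u" using kp by (simp add: t0_def pos_Suc)
    then have "f t0 = ind_a (u ! t0)" using True kp by (simp add: f_def t0_def)
    finally show ?thesis using eq True by (simp add: t0_def)
  qed
qed

lemma fibw_vals: "fibw 0 = La \<and> fibw 1 = Lb \<and> fibw 2 = La \<and> fibw 3 = La \<and> fibw 4 = Lb \<and> fibw 5 = La"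
  by (simp add: fibw_def Aw_Suc Bw_Suc numeral_eq_Suc)

lemma selfsim:
  assumes "q \<ge> 2" "c \<le> 5"
  shows "fibw (length (Aw (Suc (3*q))) + c) = fibw c"
proof -
  have A: "Aw (Suc (Suc (3*q))) = Aw (Suc (3*q)) @ Aw (3*q)" by (simp add: Aw_Suc Bw_Suc)
  have "length (Aw (3*q)) \<ge> Suc (3*q)" by (rule len_Aw)
  then have c: "c < length (Aw (3*q))" using assms by linarith
  have "fibw (length (Aw (Suc (3*q))) + c) = Aw (Suc (Suc (3*q))) ! (length (Aw (Suc (3*q))) + c)"
    using c by (intro fibw_Aw) (simp add: A)
  also have "\<dots> = Aw (3*q) ! c" by (simp add: A nth_append)
  also have "\<dots> = fibw c" using c by (simp add: fibw_Aw)
  finally show ?thesis .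
qed

lemma infinite_types:
  assumes "c \<le> 2"
  shows "infinite {k. fibw (2*k) = fibw (2*c) \<and> fibw (Suc (2*k)) = fibw (Suc (2*c))}"
  unfolding infinite_nat_iff_unbounded_le
proof
  fix m
  define q :: nat where "q = m + 2"
  define e where "e = length (Aw (Suc (3*q)))"
  have ev: "even e" unfolding e_def by (rule even_Aw31)
  have eg: "e \<ge> Suc (Suc (3*q))" unfolding e_def using len_Aw[of "Suc (3*q)"] by simp
  define k where "k = e div 2 + c"
  have k2: "2*k = e + 2*c" using ev by (simp add: k_def)
  have "fibw (2*k) = fibw (2*c)" unfolding k2 e_def using assms by (intro selfsim) (auto simp: q_def)
  moreover have "fibw (Suc (2*k)) = fibw (Suc (2*c))"
    using selfsim[of q "Suc (2*c)"] assms unfolding k2 e_def by (simp add: q_def)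
  moreover have "k \<ge> m" using eg by (simp add: k_def q_def)
  ultimately show "\<exists>k\<ge>m. k \<in> {k. fibw (2*k) = fibw (2*c) \<and> fibw (Suc (2*k)) = fibw (Suc (2*c))}"
    by blast
qed

lemma enum_facts:
  fixes K :: "nat set"
  assumes "infinite K"
  shows "strict_mono (pos N \<circ> enumerate K)" "range (pos N \<circ> enumerate K) = pos N ` K"
proof -
  show "strict_mono (pos N \<circ> enumerate K)"
    by (rule strict_monoI) (use assms pos_strict[of N] in \<open>auto simp: strict_mono_def enumerate_mono\<close>)
  have "range (enumerate K) = K" using bij_enumerate[OF assms] by (simp add: bij_betw_def)
  then show "range (pos N \<circ> enumerate K) = pos N ` K" by (metis image_comp)
qed

theorem proposition5p6:
  fixes n :: nat
  assumes "n \<ge> 1"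
  shows "\<exists>j l m :: nat \<Rightarrow> nat.
           strict_mono j \<and> strict_mono l \<and> strict_mono m \<and>
           (\<forall>k. even (j k) \<and> even (l k) \<and> even (m k)) \<and>
           Ca = Cau (Rw n) * seq_series j + Cau (Sw n) * seq_series l
                + Cau (Tw n) * seq_series m"
proof -
  define N where "N = 3*n"
  define KR where "KR = {k. fibw (2*k) = La \<and> fibw (Suc (2*k)) = Lb}"
  define KS where "KS = {k. fibw (2*k) = La \<and> fibw (Suc (2*k)) = La}"
  define KT where "KT = {k. fibw (2*k) = Lb \<and> fibw (Suc (2*k)) = La}"
  have iR: "infinite KR" using infinite_types[of 0] fibw_vals by (simp add: KR_def)
  have iS: "infinite KS" using infinite_types[of 1] fibw_vals by (simp add: KS_def)
  have iT: "infinite KT" using infinite_types[of 2] fibw_vals by (simp add: KT_def)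
  define j where "j = pos N \<circ> enumerate KR"
  define l where "l = pos N \<circ> enumerate KS"
  define m where "m = pos N \<circ> enumerate KT"
  note fR = enum_facts[OF iR, of N, folded j_def]
  note fS = enum_facts[OF iS, of N, folded l_def]
  note fT = enum_facts[OF iT, of N, folded m_def]
  have ev: "\<forall>k. even (j k) \<and> even (l k) \<and> even (m k)"
    by (simp add: j_def l_def m_def N_def pos_even)
  have bR: "\<And>k. k \<in> KR \<Longrightarrow> blk N k = Rw n" by (simp add: KR_def blk_def gN_La gN_Lb Rw_def N_def)
  have bS: "\<And>k. k \<in> KS \<Longrightarrow> blk N k = Sw n" by (simp add: KS_def blk_def gN_La gN_Lb Sw_def N_def)
  have bT: "\<And>k. k \<in> KT \<Longrightarrow> blk N k = Tw n" by (simp add: KT_def blk_def gN_La gN_Lb Tw_def N_def)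
  have eq: "Ca = Cau (Rw n) * seq_series j + Cau (Sw n) * seq_series l + Cau (Tw n) * seq_series m"
  proof (rule fps_ext)
    fix p
    obtain k where kp: "pos N k \<le> p" "p < pos N (Suc k)" using pos_exists by blast
    have cR: "fps_nth (Cau (Rw n) * seq_series j) p = (if k \<in> KR then ind_a (Rw n ! (p - pos N k)) else 0)"
      by (rule coeff_lemma[OF bR fR(2) kp])
    have cS: "fps_nth (Cau (Sw n) * seq_series l) p = (if k \<in> KS then ind_a (Sw n ! (p - pos N k)) else 0)"
      by (rule coeff_lemma[OF bS fS(2) kp])
    have cT: "fps_nth (Cau (Tw n) * seq_series m) p = (if k \<in> KT then ind_a (Tw n ! (p - pos N k)) else 0)"
      by (rule coeff_lemma[OF bT fT(2) kp])
    have q: "p - pos N k < length (blk N k)" using kp by (simp add: pos_Suc)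
    have fp: "fibw p = blk N k ! (p - pos N k)" using block_fibw[OF q] kp by simp
    have Cp: "fps_nth Ca p = ind_a (blk N k ! (p - pos N k))" by (simp add: Ca_def fp)
    have nobb: "\<not> (fibw (2*k) = Lb \<and> fibw (Suc (2*k)) = Lb)" using fibw_no_bb[of "2*k"] by auto
    show "fps_nth Ca p = fps_nth (Cau (Rw n) * seq_series j + Cau (Sw n) * seq_series l + Cau (Tw n) * seq_series m) p"
      unfolding fps_add_nth cR cS cT Cp
      using nobb bR bS bT
      by (cases "fibw (2*k)"; cases "fibw (Suc (2*k))") (auto simp: KR_def KS_def KT_def)
  qed
  show ?thesis using fR(1) fS(1) fT(1) ev eq by blast
qed

end
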